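(* Let $P_7$ be the prototype graph and, for every odd positive integer $n$, let $\phi_n:P_7\to P_7$ be the prototype map. Then every $\phi_n$ ($n$ odd and positive) is a homotopy equivalence.
   Context: The prototype graph $P_7$ has two vertices $v_0,v_1$ and seven edges $a,b,c,d,e,f,g$, each oriented from $v_0$ to $v_1$; an uppercase letter $A,\dots,G$ denotes the corresponding edge traversed in the opposite direction, and a word denotes the edge path traversing these edges in order. The prototype maps are the graph maps $P_7\to P_7$ fixing $v_0$ and $v_1$ defined by: $\phi_1=\mathrm{id}$, and for each integer $m\ge0$, $\phi_{3+2m}$ sends $a\mapsto aG(aB)^ma$, $b\mapsto bD(bC)^mb$, $c\mapsto cF(cA)^mc$, $d\mapsto aB(aB)^ma$, $e\mapsto cB(aB)^ma$, $f\mapsto aC(aB)^ma$, $g\mapsto bE(bA)^mb$ (each edge is mapped onto the indicated edge path). *)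

theory Defs
  imports "HOL-Analysis.Analysis"
begin

text \<open>Geometric realization of the prototype graph P_7 as a subspace of the plane.
  Vertices: v0 = (0,0), v1 = (1,0).  Edges a,b,c,d,e,f,g are numbered 0..6;
  edge i is the arc t \<mapsto> (t, i*t*(1-t)), t in [0,1], oriented from v0 to v1.
  Distinct arcs meet only in the two vertices.\<close>

definition arc :: "nat \<Rightarrow> real \<Rightarrow> real \<times> real" where
  "arc i t = (t, real i * t * (1 - t))"

definition P7 :: "(real \<times> real) set" where
  "P7 = {arc i t | i t. i < 7 \<and> 0 \<le> t \<and> t \<le> 1}"

definition P7_top :: "(real \<times> real) topology" where
  "P7_top = top_of_set P7"

text \<open>A letter is an edge together with a direction: (i, True) is edge i traversed
  from v0 to v1 (lowercase), (i, False) is edge i traversed backwards (uppercase).\<close>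

type_synonym letter = "nat \<times> bool"

definition letter_path :: "letter \<Rightarrow> real \<Rightarrow> real \<times> real" where
  "letter_path l s = arc (fst l) (if snd l then s else 1 - s)"

text \<open>The edge path w parametrized over [0,1], each letter taking equal time.\<close>
definition word_path :: "letter list \<Rightarrow> real \<Rightarrow> real \<times> real" where
  "word_path w t =
     (let L = length w; k = min (nat \<lfloor>t * real L\<rfloor>) (L - 1)
      in letter_path (w ! k) (t * real L - real k))"

text \<open>The graph map P_7 \<rightarrow> P_7 fixing v0 and v1 which sends edge i onto the edge path W i.\<close>
definition graph_map :: "(nat \<Rightarrow> letter list) \<Rightarrow> real \<times> real \<Rightarrow> real \<times> real" where
  "graph_map W p =
     (if fst p = 0 then (0, 0)
      else if fst p = 1 then (1, 0)
      else word_path (W (THE i. i < 7 \<and> snd p = real i * fst p * (1 - fst p))) (fst p))"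

abbreviation lo :: "nat \<Rightarrow> letter" where "lo i \<equiv> (i, True)"
abbreviation up :: "nat \<Rightarrow> letter" where "up i \<equiv> (i, False)"

text \<open>Images of the edges under phi_{3+2m}; a=0,b=1,c=2,d=3,e=4,f=5,g=6.\<close>
definition proto_word :: "nat \<Rightarrow> nat \<Rightarrow> letter list" where
  "proto_word m i =
    (let aB = concat (replicate m [lo 0, up 1]);
         bC = concat (replicate m [lo 1, up 2]);
         cA = concat (replicate m [lo 2, up 0]);
         bA = concat (replicate m [lo 1, up 0])
     in if i = 0 then [lo 0, up 6] @ aB @ [lo 0]
        else if i = 1 then [lo 1, up 3] @ bC @ [lo 1]
        else if i = 2 then [lo 2, up 5] @ cA @ [lo 2]
        else if i = 3 then [lo 0, up 1] @ aB @ [lo 0]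
        else if i = 4 then [lo 2, up 1] @ aB @ [lo 0]
        else if i = 5 then [lo 0, up 2] @ aB @ [lo 0]
        else [lo 1, up 4] @ bA @ [lo 1])"

definition proto_map :: "nat \<Rightarrow> real \<times> real \<Rightarrow> real \<times> real" where
  "proto_map n = (if n = 1 then id else graph_map (proto_word ((n - 3) div 2)))"

definition homotopy_equivalence :: "'a topology \<Rightarrow> 'b topology \<Rightarrow> ('a \<Rightarrow> 'b) \<Rightarrow> bool" where
  "homotopy_equivalence X Y f \<longleftrightarrow>
     continuous_map X Y f \<and>
     (\<exists>g. continuous_map Y X g \<and>
          homotopic_with (\<lambda>x. True) X X (g \<circ> f) id \<and>
          homotopic_with (\<lambda>x. True) Y Y (f \<circ> g) id)"

end

theory Submission
  imports Defs
begin

lemma arc_0[simp]: "arc i 0 = (0,0)" and arc_1[simp]: "arc i 1 = (1,0)"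
  by (simp_all add: arc_def)
lemma fst_arc[simp]: "fst (arc i t) = t" by (simp add: arc_def)
lemma cont_arc: "continuous_on S (arc i)"
  unfolding arc_def by (intro continuous_intros)
lemma path_arc[simp]: "path (arc i)" by (simp add: path_def cont_arc)
lemma arc_start[simp]: "pathstart (arc i) = (0,0)" by (simp add: pathstart_def)
lemma arc_finish[simp]: "pathfinish (arc i) = (1,0)" by (simp add: pathfinish_def)

definition aset :: "nat \<Rightarrow> (real \<times> real) set" where "aset i = arc i ` {0..1}"
lemma P7_eq: "P7 = (\<Union>i<7. aset i)" unfolding P7_def aset_def by fastforce
lemma aset_sub: "i < 7 \<Longrightarrow> aset i \<subseteq> P7" by (auto simp: P7_eq)
lemma path_image_arc: "path_image (arc i) = aset i" by (simp add: path_image_def aset_def)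
lemma compact_aset: "compact (aset i)"
  unfolding aset_def by (intro compact_continuous_image cont_arc compact_Icc)
lemma closed_aset: "closed (aset i)" by (simp add: compact_aset compact_imp_closed)
lemma arc_eq_iff: assumes "0 < t" "t < 1" "arc i t = arc j t" shows "i = j"
proof -
  have "real i * t * (1 - t) = real j * t * (1 - t)" using assms(3) by (simp add: arc_def)
  moreover have "t * (1 - t) > 0" using assms(1,2) by simp
  ultimately have "real i = real j" by (metis mult.assoc mult_cancel_right less_irrefl)
  then show ?thesis by simp
qed
lemma aset_elim: "p \<in> aset i \<Longrightarrow> p = arc i (fst p) \<and> fst p \<in> {0..1}"
  by (auto simp: aset_def)
lemma arc_in_P7: "i < 7 \<Longrightarrow> t \<in> {0..1} \<Longrightarrow> arc i t \<in> P7"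
  unfolding P7_def by fastforce
lemma fst_P7: "p \<in> P7 \<Longrightarrow> fst p \<in> {0..1}"
  by (auto simp: P7_def)

lemma lp_True[simp]: "letter_path (i,True) = arc i"
  by (rule ext) (simp add: letter_path_def)
lemma lp_False[simp]: "letter_path (i,False) = reversepath (arc i)"
  by (rule ext) (simp add: letter_path_def reversepath_def)

definition vtx :: "bool \<Rightarrow> real \<times> real" where "vtx b = (if b then (0,0) else (1,0))"
lemma V_simps[simp]: "vtx True = (0,0)" "vtx False = (1,0)" by (auto simp: vtx_def)
lemma V_inj[simp]: "vtx a = vtx b \<longleftrightarrow> a = b" by (auto simp: vtx_def)

lemma lp_start[simp]: "pathstart (letter_path l) = vtx (snd l)"
  by (cases l) (auto simp: pathstart_def letter_path_def vtx_def)
lemma lp_finish[simp]: "pathfinish (letter_path l) = vtx (\<not> snd l)"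
  by (cases l) (auto simp: pathfinish_def letter_path_def vtx_def)
lemma lp_path[simp]: "path (letter_path l)"
  by (cases l; cases "snd l") auto
lemma lp_image: "fst l < 7 \<Longrightarrow> path_image (letter_path l) \<subseteq> P7"
  by (cases l; cases "snd l") (auto simp: path_image_arc aset_sub)

fun ok :: "bool \<Rightarrow> letter list \<Rightarrow> bool" where
  "ok b [] = True"
| "ok b (l # w) = (snd l = b \<and> fst l < 7 \<and> ok (\<not> b) w)"

fun jp :: "letter list \<Rightarrow> real \<Rightarrow> real \<times> real" where
  "jp [] = arc 0"
| "jp [l] = letter_path l"
| "jp (l # l' # w) = letter_path l +++ jp (l' # w)"

lemma jp_props: "ok b w \<Longrightarrow> w \<noteq> [] \<Longrightarrow> path (jp w) \<and> path_image (jp w) \<subseteq> P7 \<and>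
   pathstart (jp w) = vtx b \<and> pathfinish (jp w) = vtx (if even (length w) then b else \<not> b)"
proof (induction w arbitrary: b rule: jp.induct)
  case (2 l)
  then show ?case using lp_image[of l] by auto
next
  case (3 l l' w)
  then have IH: "path (jp (l' # w)) \<and> path_image (jp (l' # w)) \<subseteq> P7 \<and>
   pathstart (jp (l' # w)) = vtx (\<not> b) \<and> pathfinish (jp (l' # w)) = vtx (if even (length (l' # w)) then \<not> b else b)"
    by auto
  have s: "snd l = b" "fst l < 7" using 3 by auto
  have m: "pathfinish (letter_path l) = pathstart (jp (l' # w))" using IH s by simp
  show ?case using IH s m lp_image[of l]
    by (auto simp: path_image_join)
qed simp

lemma wp_single: "t \<in> {0..1} \<Longrightarrow> word_path [l] t = letter_path l t"
  by (simp add: word_path_def)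

lemma wp_cons:
  assumes w: "w \<noteq> []" and t: "t \<in> {0..1}"
  shows "word_path (l # w) t = (if t * (real (length w) + 1) < 1 then letter_path l (t * (real (length w) + 1))
          else word_path w ((t * (real (length w) + 1) - 1) / real (length w)))"
proof -
  define N where "N = length w"
  have N: "N \<ge> 1" using w by (simp add: N_def Suc_le_eq)
  have L: "length (l # w) = N + 1" by (simp add: N_def)
  have t0: "0 \<le> t" using t by simp
  show ?thesis
  proof (cases "t * (real N + 1) < 1")
    case True
    have "\<lfloor>t * (real N + 1)\<rfloor> = 0" using True t0 by (simp add: floor_eq_iff)
    then show ?thesis using True unfolding word_path_def Let_def L N_def[symmetric]
      by (simp add: add.commute)
  next
    case False
    define j where "j = nat \<lfloor>t * (real N + 1)\<rfloor>"
    have j1: "j \<ge> 1" using False unfolding j_def by linarith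
    define k where "k = min j N"
    have k1: "k \<ge> 1" using j1 N by (simp add: k_def)
    have lhs: "word_path (l # w) t = letter_path (w ! (k - 1)) (t * (real N + 1) - real k)"
    proof -
      have "min (nat \<lfloor>t * real (N + 1)\<rfloor>) (N + 1 - 1) = k" by (simp add: k_def j_def add.commute)
      then show ?thesis unfolding word_path_def Let_def L using k1
        by (simp add: nth_Cons' add.commute)
    qed
    define t' where "t' = (t * (real N + 1) - 1) / real N"
    have tN: "t' * real N = t * (real N + 1) - 1" using N by (simp add: t'_def)
    have fl: "\<lfloor>t' * real N\<rfloor> = \<lfloor>t * (real N + 1)\<rfloor> - 1" unfolding tN by simp
    have "nat \<lfloor>t' * real N\<rfloor> = j - 1" unfolding fl j_def using j1 j_def by linarith
    then have k': "min (nat \<lfloor>t' * real N\<rfloor>) (N - 1) = k - 1" by (simp add: k_def min_diff)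
    have rhs: "word_path w t' = letter_path (w ! (k - 1)) (t * (real N + 1) - real k)"
      unfolding word_path_def Let_def N_def[symmetric] k' using k1 tN by (simp add: of_nat_diff)
    show ?thesis using False lhs rhs by (simp add: N_def t'_def)
  qed
qed

lemma wp_hom: "ok b w \<Longrightarrow> w \<noteq> [] \<Longrightarrow> homotopic_paths P7 (jp w) (word_path w)"
proof (induction w arbitrary: b rule: jp.induct)
  case (2 l)
  then show ?case using lp_image[of l]
    by (intro homotopic_paths_eq) (auto simp: wp_single)
next
  case (3 l l' w)
  define w2 where "w2 = l' # w"
  have s: "snd l = b" "fst l < 7" using 3 by auto
  have okw2: "ok (\<not> b) w2" using 3 by (simp add: w2_def)
  have IH: "homotopic_paths P7 (jp w2) (word_path w2)" using 3 by (simp add: w2_def)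
  have jpp: "path (jp w2)" "path_image (jp w2) \<subseteq> P7" "pathstart (jp w2) = vtx (\<not> b)"
    using jp_props[OF okw2] by (auto simp: w2_def)
  have wpp: "path (word_path w2)" "path_image (word_path w2) \<subseteq> P7" "pathstart (word_path w2) = vtx (\<not> b)"
    using IH homotopic_paths_imp_path homotopic_paths_imp_subset homotopic_paths_imp_pathstart jpp by metis+
  have m: "pathfinish (letter_path l) = pathstart (jp w2)" using s jpp by simp
  have h1: "homotopic_paths P7 (letter_path l +++ jp w2) (letter_path l +++ word_path w2)"
    using IH m lp_image[of l] s by (intro homotopic_paths_join) auto
  define N where "N = real (length w2)"
  have N1: "N \<ge> 1" by (simp add: N_def w2_def)
  define f where "f = (\<lambda>t::real. if t * (N + 1) \<le> 1 then t * (N + 1) / 2 else 1/2 + (t * (N + 1) - 1) / (2 * N))"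
  have h2: "homotopic_paths P7 (letter_path l +++ word_path w2) (word_path (l # w2))"
  proof (rule homotopic_paths_reparametrize[where f = f])
    show "path (letter_path l +++ word_path w2)" using wpp m jpp by simp
    show "path_image (letter_path l +++ word_path w2) \<subseteq> P7"
      using wpp m jpp lp_image[of l] s by (simp add: path_image_join)
    show "continuous_on {0..1} f" unfolding f_def
      using N1 by (intro continuous_on_cases_le) (auto intro!: continuous_intros simp: divide_simps)
    show "f \<in> {0..1} \<rightarrow> {0..1}"
    proof
      fix t :: real assume t: "t \<in> {0..1}"
      show "f t \<in> {0..1}"
      proof (cases "t * (N + 1) \<le> 1")
        case True then show ?thesis using t N1 by (simp add: f_def)
      next
        case False
        have "t * (N + 1) \<le> 1 * (N + 1)" using t N1 by (intro mult_right_mono) auto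
        then have "t * (N + 1) - 1 \<le> N" by simp
        then have "(t * (N + 1) - 1) / (2 * N) \<le> 1/2" using N1 by (simp add: divide_simps)
        moreover have "0 \<le> (t * (N + 1) - 1) / (2 * N)" using False N1 by simp
        moreover have "f t = 1/2 + (t * (N + 1) - 1) / (2 * N)" using False by (simp add: f_def)
        ultimately show ?thesis by (simp del: times_divide_eq_left divide_le_eq_1)
      qed
    qed
    show "f 0 = 0" by (simp add: f_def)
    show "f 1 = 1" using N1 by (simp add: f_def divide_simps)
    fix t :: real assume t: "t \<in> {0..1}"
    have w2ne: "w2 \<noteq> []" by (simp add: w2_def)
    show "word_path (l # w2) t = (letter_path l +++ word_path w2) (f t)"
    proof (cases "t * (N + 1) < 1")
      case True
      then show ?thesis using wp_cons[OF w2ne t] t by (simp add: f_def joinpaths_def N_def)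
    next
      case False
      show ?thesis
      proof (cases "t * (N + 1) = 1")
        case True
        have "word_path w2 0 = letter_path l 1"
          using wpp(3) s lp_finish[of l] by (simp add: pathstart_def pathfinish_def)
        then show ?thesis using wp_cons[OF w2ne t] True by (simp add: f_def joinpaths_def N_def)
      next
        case False2: False
        have gt: "t * (N + 1) > 1" using False False2 by simp
        have ft: "f t = 1/2 + (t * (N + 1) - 1) / (2 * N)" using gt by (simp add: f_def)
        have pos: "(t * (N + 1) - 1) / (2 * N) > 0" using gt N1 by simp
        have e2: "2 * f t - 1 = (t * (N + 1) - 1) / N"
          unfolding ft using N1 by (simp add: divide_simps)
        have "\<not> f t \<le> 1/2" using ft pos by linarith
        then have "(letter_path l +++ word_path w2) (f t) = word_path w2 (2 * f t - 1)"
          by (simp add: joinpaths_def)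
        then show ?thesis using wp_cons[OF w2ne t] gt e2
          by (simp add: N_def)
      qed
    qed
  qed
  show ?case using homotopic_paths_trans[OF h1 h2] by (simp add: w2_def)
qed auto

lemma wp_props: assumes "ok b w" "w \<noteq> []"
  shows "path (word_path w)" "path_image (word_path w) \<subseteq> P7" "pathstart (word_path w) = vtx b"
    "pathfinish (word_path w) = vtx (if even (length w) then b else \<not> b)"
  using wp_hom[OF assms] jp_props[OF assms] homotopic_paths_imp_path homotopic_paths_imp_subset
    homotopic_paths_imp_pathstart homotopic_paths_imp_pathfinish by metis+

definition good :: "(nat \<Rightarrow> letter list) \<Rightarrow> bool" where
  "good W \<longleftrightarrow> (\<forall>i<7. ok True (W i) \<and> odd (length (W i)))"

lemma good_ne: "good W \<Longrightarrow> i < 7 \<Longrightarrow> W i \<noteq> []"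
  unfolding good_def by fastforce

lemma good_wp: assumes "good W" "i < 7"
  shows "path (word_path (W i))" "path_image (word_path (W i)) \<subseteq> P7"
    "pathstart (word_path (W i)) = (0,0)" "pathfinish (word_path (W i)) = (1,0)"
  using wp_props[of True "W i"] assms good_ne[OF assms] unfolding good_def by auto

lemma the_idx: assumes "0 < t" "t < 1" "i < 7"
  shows "(THE j. j < 7 \<and> real i * t * (1 - t) = real j * t * (1 - t)) = i"
proof (rule the_equality)
  fix j assume "j < 7 \<and> real i * t * (1 - t) = real j * t * (1 - t)"
  then have "arc i t = arc j t" by (simp add: arc_def)
  then show "j = i" using arc_eq_iff assms by metis
qed (use assms in auto)

lemma gm_arc: assumes "good W" "i < 7" "t \<in> {0..1}"
  shows "graph_map W (arc i t) = word_path (W i) t"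
proof -
  consider "t = 0" | "t = 1" | "0 < t \<and> t < 1" using assms(3) by fastforce
  then show ?thesis
  proof cases
    case 1 then show ?thesis using good_wp[OF assms(1,2)] by (simp add: graph_map_def pathstart_def)
  next
    case 2 then show ?thesis using good_wp[OF assms(1,2)] by (simp add: graph_map_def pathfinish_def)
  next
    case 3 then show ?thesis using the_idx[of t i] assms by (simp add: graph_map_def arc_def)
  qed
qed

lemma gm_aset: "good W \<Longrightarrow> i < 7 \<Longrightarrow> p \<in> aset i \<Longrightarrow> graph_map W p = word_path (W i) (fst p)"
  using gm_arc aset_elim by metis

lemma gm_cont: assumes "good W" shows "continuous_on P7 (graph_map W)"
  unfolding P7_eq
proof (rule continuous_on_closed_Union)
  fix i :: nat assume i: "i \<in> {..<7}"
  have "continuous_on (aset i) (word_path (W i) \<circ> fst)"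
  proof (rule continuous_on_compose)
    show "continuous_on (aset i) fst" by (intro continuous_intros)
    have "fst ` aset i \<subseteq> {0..1}" using aset_elim by blast
    then show "continuous_on (fst ` aset i) (word_path (W i))"
      using good_wp(1)[OF assms] i unfolding path_def by (meson continuous_on_subset lessThan_iff)
  qed
  then show "continuous_on (aset i) (graph_map W)"
    by (rule continuous_on_eq) (use gm_aset[OF assms] i in auto)
qed (auto simp: closed_aset)

lemma gm_image: assumes "good W" shows "graph_map W \<in> P7 \<rightarrow> P7"
proof
  fix p assume "p \<in> P7"
  then obtain i :: nat where i: "i < 7" "p \<in> aset i" unfolding P7_eq by blast
  then have "graph_map W p = word_path (W i) (fst p)" using gm_aset assms by blast
  moreover have "fst p \<in> {0..1}" using aset_elim i by blast
  ultimately show "graph_map W p \<in> P7" using good_wp(2)[OF assms i(1)] by (auto simp: path_image_def)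
qed

lemma gm_v0[simp]: "graph_map W (0,0) = (0,0)" by (simp add: graph_map_def)

lemma gm_cmap: "good W \<Longrightarrow> continuous_map P7_top P7_top (graph_map W)"
  using gm_cont gm_image by (simp add: P7_top_def)

definition ix :: "real \<times> real \<Rightarrow> nat" where
  "ix p = (if 0 < fst p \<and> fst p < 1 then THE j. j < 7 \<and> snd p = real j * fst p * (1 - fst p) else 0)"

lemma ix_arc: "i < 7 \<Longrightarrow> 0 < t \<Longrightarrow> t < 1 \<Longrightarrow> ix (arc i t) = i"
  using the_idx[of t i] by (simp add: ix_def arc_def)

lemma paste_hom:
  assumes f: "continuous_on P7 f" "f \<in> P7 \<rightarrow> P7" and g: "continuous_on P7 g" "g \<in> P7 \<rightarrow> P7"
    and H: "\<And>i. i < 7 \<Longrightarrow> homotopic_paths P7 (f \<circ> arc i) (g \<circ> arc i)"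
  shows "homotopic_with (\<lambda>x. True) P7_top P7_top f g"
proof -
  define Q where "Q = (\<lambda>i h. continuous_on ({0..1} \<times> {0..1}) h \<and>
          h \<in> ({0..1} \<times> {0..1}) \<rightarrow> P7 \<and>
          (\<forall>x \<in> {0..1}. h(0,x) = (f \<circ> arc i) x) \<and>
          (\<forall>x \<in> {0..1}. h(1,x) = (g \<circ> arc i) x) \<and>
          (\<forall>t \<in> {0..1::real}. pathstart(h \<circ> Pair t) = pathstart (f \<circ> arc i) \<and>
                        pathfinish(h \<circ> Pair t) = pathfinish (f \<circ> arc i)))"
  have "\<forall>i\<in>{..<7::nat}. \<exists>h. Q i h" using H unfolding Q_def homotopic_paths by blast
  then obtain hh where hh: "\<And>i. i < 7 \<Longrightarrow> Q i (hh i)" by (metis bchoice lessThan_iff)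
  define K where "K = (\<lambda>z::real \<times> (real \<times> real). hh (ix (snd z)) (fst z, fst (snd z)))"
  have Kpiece: "K z = hh i (fst z, fst (snd z))" if i: "i < 7" and z: "z \<in> {0..1} \<times> aset i" for i z
  proof -
    obtain s p where zp: "z = (s, p)" "s \<in> {0..1}" "p \<in> aset i" using z by auto
    have p: "p = arc i (fst p)" "fst p \<in> {0..1}" using aset_elim zp by blast+
    have Qi: "Q i (hh i)" and Q0: "Q 0 (hh 0)" using hh i by auto
    consider "fst p = 0" | "fst p = 1" | "0 < fst p \<and> fst p < 1" using p by fastforce
    then show ?thesis
    proof cases
      case 1
      have "ix p = 0" using 1 by (simp add: ix_def)
      moreover have "hh 0 (s, 0) = f (0,0)" "hh i (s, 0) = f (0,0)"
        using Qi Q0 zp unfolding Q_def by (auto simp: pathstart_def)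
      ultimately show ?thesis using zp 1 by (simp add: K_def)
    next
      case 2
      have "ix p = 0" using 2 by (simp add: ix_def)
      moreover have "hh 0 (s, 1) = f (1,0)" "hh i (s, 1) = f (1,0)"
        using Qi Q0 zp unfolding Q_def by (auto simp: pathfinish_def)
      ultimately show ?thesis using zp 2 by (simp add: K_def)
    next
      case 3
      have "ix p = i" using ix_arc[of i "fst p"] 3 p i by metis
      then show ?thesis using zp by (simp add: K_def)
    qed
  qed
  have cont: "continuous_on ({0..1} \<times> P7) K"
  proof -
    have eq: "{0..1} \<times> P7 = (\<Union>i\<in>{..<7}. {0..1::real} \<times> aset i)" unfolding P7_eq by auto
    show ?thesis unfolding eq
    proof (rule continuous_on_closed_Union)
      fix i :: nat assume i: "i \<in> {..<7}"
      have Qi: "Q i (hh i)" using hh i by auto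
      have "continuous_on ({0..1} \<times> aset i) (hh i \<circ> (\<lambda>z. (fst z, fst (snd z))))"
      proof (rule continuous_on_compose)
        show "continuous_on ({0..1} \<times> aset i) (\<lambda>z. (fst z, fst (snd z)))" by (intro continuous_intros)
        have sub: "(\<lambda>z. (fst z, fst (snd z))) ` ({0..1} \<times> aset i) \<subseteq> {0..1} \<times> {0..1}"
          using aset_elim by fastforce
        have "continuous_on ({0..1} \<times> {0..1}) (hh i)" using Qi unfolding Q_def by blast
        then show "continuous_on ((\<lambda>z. (fst z, fst (snd z))) ` ({0..1} \<times> aset i)) (hh i)"
          using sub by (rule continuous_on_subset)
      qed
      then show "continuous_on ({0..1} \<times> aset i) K"
        by (rule continuous_on_eq) (use Kpiece i in auto)
    qed (auto intro: closed_Times closed_aset)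
  qed
  have img: "K \<in> ({0..1} \<times> P7) \<rightarrow> P7"
  proof
    fix z :: "real \<times> (real \<times> real)" assume "z \<in> {0..1} \<times> P7"
    then obtain i :: nat where i: "i < 7" "z \<in> {0..1} \<times> aset i" unfolding P7_eq by auto
    have Qi: "Q i (hh i)" using hh i by auto
    have "(fst z, fst (snd z)) \<in> {0..1} \<times> {0..1}" using i aset_elim by fastforce
    then show "K z \<in> P7" using Kpiece[OF i] Qi unfolding Q_def by auto
  qed
  have e0: "K (0, x) = f x" if xP: "x \<in> P7" for x
  proof -
    obtain i :: nat where i: "i < 7" "x \<in> aset i" using xP unfolding P7_eq by blast
    have Qi: "Q i (hh i)" using hh i by auto
    have "K (0, x) = hh i (0, fst x)" using Kpiece[of i "(0,x)"] i by auto
    also have "\<dots> = f (arc i (fst x))" using Qi aset_elim[OF i(2)] unfolding Q_def by auto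
    also have "\<dots> = f x" using aset_elim[OF i(2)] by metis
    finally show ?thesis .
  qed
  have e1: "K (1, x) = g x" if xP: "x \<in> P7" for x
  proof -
    obtain i :: nat where i: "i < 7" "x \<in> aset i" using xP unfolding P7_eq by blast
    have Qi: "Q i (hh i)" using hh i by auto
    have "K (1, x) = hh i (1, fst x)" using Kpiece[of i "(1,x)"] i by auto
    also have "\<dots> = g (arc i (fst x))" using Qi aset_elim[OF i(2)] unfolding Q_def by auto
    also have "\<dots> = g x" using aset_elim[OF i(2)] by metis
    finally show ?thesis .
  qed
  show ?thesis
    unfolding P7_top_def
    by (subst homotopic_with) (use cont img e0 e1 in \<open>auto intro!: exI[where x=K]\<close>)
qed

primrec pw :: "nat \<Rightarrow> 'a::group_add \<Rightarrow> 'a" where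
 "pw 0 x = 0" | "pw (Suc n) x = x + pw n x"
lemma pw_add: "pw (m+n) x = pw m x + pw n x" by (induct m) (auto simp: add.assoc)
lemma pw_comm: "x + pw n x = pw n x + x" by (induct n) (auto simp: add.assoc[symmetric])
lemma pw_minus: "- pw n x = pw n (-x)" 
  by (induct n) (auto simp: minus_add pw_comm)
definition rep :: "nat \<Rightarrow> 'b list \<Rightarrow> 'b list" where "rep k u = concat (replicate k u)"
definition flipw :: "letter list \<Rightarrow> letter list" where "flipw u = rev (map (\<lambda>(i,b). (i, \<not> b)) u)"
fun Iv :: "(nat \<Rightarrow> 'a::group_add) \<Rightarrow> letter \<Rightarrow> 'a" where
 "Iv gen (i,b) = (if b then gen i else - gen i)"
definition Sw :: "(nat \<Rightarrow> 'a::group_add) \<Rightarrow> letter list \<Rightarrow> 'a" where "Sw gen w = sum_list (map (Iv gen) w)"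
lemma S_simps[simp]: "Sw gen [] = 0" "Sw gen (l # w) = Iv gen l + Sw gen w" "Sw gen (u @ w) = Sw gen u + Sw gen w"
  by (auto simp: Sw_def sum_list_append)
lemma S_rep[simp]: "Sw gen (rep k u) = pw k (Sw gen u)"
  by (induct k) (auto simp: rep_def)
lemma S_flip[simp]: "Sw gen (flipw u) = - Sw gen u"
  by (induct u) (auto simp: flipw_def minus_add)

fun bw :: "letter \<Rightarrow> letter list" where
  "bw (i, True) = [(i,True), (0,False)]" | "bw (i, False) = [(0,True),(i,False)]"
definition bars :: "letter list \<Rightarrow> letter list" where "bars u = concat (map bw u)"
lemma S_bars[simp]: "gen 0 = 0 \<Longrightarrow> Sw gen (bars u) = Sw gen u"
  by (induct u) (auto simp: bars_def)
lemma bars_app[simp]: "bars (u @ v) = bars u @ bars v"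
  by (auto simp: bars_def)
lemma bars_rep[simp]: "bars (rep k u) = rep k (bars u)"
  by (induct k) (auto simp: rep_def bars_def)

definition "Ch = [lo 4, up 3]"
definition "Gh = Ch @ [lo 5]"
definition "Bh = Gh @ [up 3]"
definition "Eh m = rep (2*m+1) Bh @ Gh @ [up 6] @ Bh"
definition "Dh m = rep m (Bh @ flipw Ch) @ rep (m+1) Bh @ Gh @ [up 1] @ Bh"
definition "Fh m = rep (m+1) Ch @ rep m Bh @ Gh @ [up 2] @ Ch"
definition "qh m = rep m Bh @ Gh"
definition "psi_hat m (i::nat) = (if i=1 then Bh else if i=2 then Ch else if i=3 then Dh m else if i=4 then Eh m else if i=5 then Fh m else Gh)"
definition "psi_word m (i::nat) = (if i = 0 then bars (qh m) @ [lo 0] else bars (psi_hat m i) @ bars (qh m) @ [lo 0])"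

lemma pw_cancel: "x + y = 0 \<Longrightarrow> pw m x + pw m y = 0"
  by (induct m) (auto simp: pw_comm add.assoc, metis add.assoc add_0 pw_comm) 
lemma pw_cancel2: "x + y = 0 \<Longrightarrow> pw m x + (pw m y + z) = z"
  by (metis add.assoc add_0 pw_cancel)
lemma pw_commute: "x + y = y + x \<Longrightarrow> x + pw m y = pw m y + x"
proof (induct m)
  case (Suc m)
  then have "x + (y + pw m y) = y + (x + pw m y)" by (metis add.assoc)
  also have "\<dots> = y + pw m y + x" using Suc by (simp add: add.assoc)
  finally show ?case by simp
qed simp
lemma pw_commute2: assumes "x + y = y + x" shows "x + (pw m y + z) = pw m y + (x + z)"
proof -
  have "x + (pw m y + z) = (x + pw m y) + z" by (simp add: add.assoc)
  also have "\<dots> = (pw m y + x) + z" using pw_commute[OF assms] by simp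
  finally show ?thesis by (simp add: add.assoc)
qed
declare add_uminus_conv_diff[simp del]
lemmas gs0 = pw_minus pw_cancel pw_cancel2 add.assoc diff_conv_add_uminus minus_add add_minus_cancel minus_add_cancel minus_minus

lemma pcA: "x + pw m x = pw m x + x" "x + (pw m x + z) = pw m x + (x + z)"
  "x + pw m (-x) = pw m (-x) + x" "x + (pw m (-x) + z) = pw m (-x) + (x + z)"
  "-x + pw m x = pw m x + -x" "-x + (pw m x + z) = pw m x + (-x + z)"
  by (rule pw_commute pw_commute2; simp)+
lemmas gs = gs0 pcA

lemma proto_S0: "gen 0 = 0 \<Longrightarrow> Sw gen (proto_word m 0) = - gen 6 + pw m (- gen 1)"
  by (simp add: proto_word_def Let_def rep_def[symmetric] gs)
lemma proto_S1: "gen 0 = 0 \<Longrightarrow> Sw gen (proto_word m 1) = gen 1 + - gen 3 + pw m (gen 1 + - gen 2) + gen 1"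
  by (simp add: proto_word_def Let_def rep_def[symmetric] gs)
lemma proto_S2: "gen 0 = 0 \<Longrightarrow> Sw gen (proto_word m 2) = gen 2 + - gen 5 + pw m (gen 2) + gen 2"
  by (simp add: proto_word_def Let_def rep_def[symmetric] gs)
lemma proto_S3: "gen 0 = 0 \<Longrightarrow> Sw gen (proto_word m 3) = - gen 1 + pw m (- gen 1)"
  by (simp add: proto_word_def Let_def rep_def[symmetric] gs)
lemma proto_S4: "gen 0 = 0 \<Longrightarrow> Sw gen (proto_word m 4) = gen 2 + - gen 1 + pw m (- gen 1)"
  by (simp add: proto_word_def Let_def rep_def[symmetric] gs)
lemma proto_S5: "gen 0 = 0 \<Longrightarrow> Sw gen (proto_word m 5) = - gen 2 + pw m (- gen 1)"
  by (simp add: proto_word_def Let_def rep_def[symmetric] gs)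
lemma proto_S6: "gen 0 = 0 \<Longrightarrow> Sw gen (proto_word m 6) = gen 1 + - gen 4 + pw m (gen 1) + gen 1"
  by (simp add: proto_word_def Let_def rep_def[symmetric] gs)
lemma proto_S1': "gen 0 = 0 \<Longrightarrow> Sw gen (proto_word m (Suc 0)) = gen 1 + - gen 3 + pw m (gen 1 + - gen 2) + gen 1"
  using proto_S1 by simp
lemmas proto_S = proto_S1' proto_S0 proto_S1 proto_S2 proto_S3 proto_S4 proto_S5 proto_S6

lemma pw_double[simp]: "pw (2*m) x = pw m x + pw m x"
  by (metis mult_2 pw_add)


lemma alg1_0:
  fixes gen :: "nat \<Rightarrow> 'a::group_add" and h :: "'a \<Rightarrow> 'a"
  assumes g0: "gen 0 = 0" and hadd: "\<And>x y. h (x + y) = h x + h y" and hmin: "\<And>x. h (-x) = - h x"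
   and h0: "h 0 = 0" and hpw: "\<And>n x. h (pw n x) = pw n (h x)"
   and hg: "\<And>i. i < 7 \<Longrightarrow> h (gen i) = Sw gen (psi_word m i) - Sw gen (psi_word m 0)"
  shows "h (Sw gen (proto_word m 0)) + Sw gen (psi_word m 0) = gen 0"
  apply ((simp_all add: proto_S g0 hadd hmin h0 hpw hg)?)
  apply ((simp_all add: psi_word_def psi_hat_def g0)?)
  apply ((simp_all add: Eh_def Dh_def Fh_def qh_def g0 gs)?)
  apply ((simp_all add: Bh_def Gh_def Ch_def g0 gs)?)
  done
lemma alg1_1:
  fixes gen :: "nat \<Rightarrow> 'a::group_add" and h :: "'a \<Rightarrow> 'a"
  assumes g0: "gen 0 = 0" and hadd: "\<And>x y. h (x + y) = h x + h y" and hmin: "\<And>x. h (-x) = - h x"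
   and h0: "h 0 = 0" and hpw: "\<And>n x. h (pw n x) = pw n (h x)"
   and hg: "\<And>i. i < 7 \<Longrightarrow> h (gen i) = Sw gen (psi_word m i) - Sw gen (psi_word m 0)"
  shows "h (Sw gen (proto_word m 1)) + Sw gen (psi_word m 0) = gen 1"
  apply ((simp_all add: proto_S g0 hadd hmin h0 hpw hg)?)
  apply ((simp_all add: psi_word_def psi_hat_def g0)?)
  apply ((simp_all add: Eh_def Dh_def Fh_def qh_def g0 gs)?)
  apply ((simp_all add: Bh_def Gh_def Ch_def g0 gs)?)
  done
lemma alg1_2:
  fixes gen :: "nat \<Rightarrow> 'a::group_add" and h :: "'a \<Rightarrow> 'a"
  assumes g0: "gen 0 = 0" and hadd: "\<And>x y. h (x + y) = h x + h y" and hmin: "\<And>x. h (-x) = - h x"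
   and h0: "h 0 = 0" and hpw: "\<And>n x. h (pw n x) = pw n (h x)"
   and hg: "\<And>i. i < 7 \<Longrightarrow> h (gen i) = Sw gen (psi_word m i) - Sw gen (psi_word m 0)"
  shows "h (Sw gen (proto_word m 2)) + Sw gen (psi_word m 0) = gen 2"
  apply ((simp_all add: proto_S g0 hadd hmin h0 hpw hg)?)
  apply ((simp_all add: psi_word_def psi_hat_def g0)?)
  apply ((simp_all add: Eh_def Dh_def Fh_def qh_def g0 gs)?)
  apply ((simp_all add: Bh_def Gh_def Ch_def g0 gs)?)
  done
lemma alg1_3:
  fixes gen :: "nat \<Rightarrow> 'a::group_add" and h :: "'a \<Rightarrow> 'a"
  assumes g0: "gen 0 = 0" and hadd: "\<And>x y. h (x + y) = h x + h y" and hmin: "\<And>x. h (-x) = - h x"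
   and h0: "h 0 = 0" and hpw: "\<And>n x. h (pw n x) = pw n (h x)"
   and hg: "\<And>i. i < 7 \<Longrightarrow> h (gen i) = Sw gen (psi_word m i) - Sw gen (psi_word m 0)"
  shows "h (Sw gen (proto_word m 3)) + Sw gen (psi_word m 0) = gen 3"
  apply ((simp_all add: proto_S g0 hadd hmin h0 hpw hg)?)
  apply ((simp_all add: psi_word_def psi_hat_def g0)?)
  apply ((simp_all add: Eh_def Dh_def Fh_def qh_def g0 gs)?)
  apply ((simp_all add: Bh_def Gh_def Ch_def g0 gs)?)
  done
lemma alg1_4:
  fixes gen :: "nat \<Rightarrow> 'a::group_add" and h :: "'a \<Rightarrow> 'a"
  assumes g0: "gen 0 = 0" and hadd: "\<And>x y. h (x + y) = h x + h y" and hmin: "\<And>x. h (-x) = - h x"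
   and h0: "h 0 = 0" and hpw: "\<And>n x. h (pw n x) = pw n (h x)"
   and hg: "\<And>i. i < 7 \<Longrightarrow> h (gen i) = Sw gen (psi_word m i) - Sw gen (psi_word m 0)"
  shows "h (Sw gen (proto_word m 4)) + Sw gen (psi_word m 0) = gen 4"
  apply ((simp_all add: proto_S g0 hadd hmin h0 hpw hg)?)
  apply ((simp_all add: psi_word_def psi_hat_def g0)?)
  apply ((simp_all add: Eh_def Dh_def Fh_def qh_def g0 gs)?)
  apply ((simp_all add: Bh_def Gh_def Ch_def g0 gs)?)
  done
lemma alg1_5:
  fixes gen :: "nat \<Rightarrow> 'a::group_add" and h :: "'a \<Rightarrow> 'a"
  assumes g0: "gen 0 = 0" and hadd: "\<And>x y. h (x + y) = h x + h y" and hmin: "\<And>x. h (-x) = - h x"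
   and h0: "h 0 = 0" and hpw: "\<And>n x. h (pw n x) = pw n (h x)"
   and hg: "\<And>i. i < 7 \<Longrightarrow> h (gen i) = Sw gen (psi_word m i) - Sw gen (psi_word m 0)"
  shows "h (Sw gen (proto_word m 5)) + Sw gen (psi_word m 0) = gen 5"
  apply ((simp_all add: proto_S g0 hadd hmin h0 hpw hg)?)
  apply ((simp_all add: psi_word_def psi_hat_def g0)?)
  apply ((simp_all add: Eh_def Dh_def Fh_def qh_def g0 gs)?)
  apply ((simp_all add: Bh_def Gh_def Ch_def g0 gs)?)
  done
lemma alg1_6:
  fixes gen :: "nat \<Rightarrow> 'a::group_add" and h :: "'a \<Rightarrow> 'a"
  assumes g0: "gen 0 = 0" and hadd: "\<And>x y. h (x + y) = h x + h y" and hmin: "\<And>x. h (-x) = - h x"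
   and h0: "h 0 = 0" and hpw: "\<And>n x. h (pw n x) = pw n (h x)"
   and hg: "\<And>i. i < 7 \<Longrightarrow> h (gen i) = Sw gen (psi_word m i) - Sw gen (psi_word m 0)"
  shows "h (Sw gen (proto_word m 6)) + Sw gen (psi_word m 0) = gen 6"
  apply ((simp_all add: proto_S g0 hadd hmin h0 hpw hg)?)
  apply ((simp_all add: psi_word_def psi_hat_def g0)?)
  apply ((simp_all add: Eh_def Dh_def Fh_def qh_def g0 gs)?)
  apply ((simp_all add: Bh_def Gh_def Ch_def g0 gs)?)
  done
lemma alg2_0:
  fixes gen :: "nat \<Rightarrow> 'a::group_add" and h :: "'a \<Rightarrow> 'a"
  assumes g0: "gen 0 = 0" and hadd: "\<And>x y. h (x + y) = h x + h y" and hmin: "\<And>x. h (-x) = - h x"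
   and h0: "h 0 = 0" and hpw: "\<And>n x. h (pw n x) = pw n (h x)"
   and hg: "\<And>i. i < 7 \<Longrightarrow> h (gen i) = Sw gen (proto_word m i) - Sw gen (proto_word m 0)"
  shows "h (Sw gen (psi_word m 0)) + Sw gen (proto_word m 0) = gen 0"
  apply ((simp_all add: psi_word_def psi_hat_def g0)?)
  apply ((simp_all add: Eh_def Dh_def Fh_def qh_def g0 gs hadd hmin h0 hpw)?)
  apply ((simp_all add: Bh_def Gh_def Ch_def g0 gs hadd hmin h0 hpw hg)?)
  apply ((simp_all add: proto_S g0 gs)?)
  done
lemma alg2_1:
  fixes gen :: "nat \<Rightarrow> 'a::group_add" and h :: "'a \<Rightarrow> 'a"
  assumes g0: "gen 0 = 0" and hadd: "\<And>x y. h (x + y) = h x + h y" and hmin: "\<And>x. h (-x) = - h x"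
   and h0: "h 0 = 0" and hpw: "\<And>n x. h (pw n x) = pw n (h x)"
   and hg: "\<And>i. i < 7 \<Longrightarrow> h (gen i) = Sw gen (proto_word m i) - Sw gen (proto_word m 0)"
  shows "h (Sw gen (psi_word m 1)) + Sw gen (proto_word m 0) = gen 1"
  apply ((simp_all add: psi_word_def psi_hat_def g0)?)
  apply ((simp_all add: Eh_def Dh_def Fh_def qh_def g0 gs hadd hmin h0 hpw)?)
  apply ((simp_all add: Bh_def Gh_def Ch_def g0 gs hadd hmin h0 hpw hg)?)
  apply ((simp_all add: proto_S g0 gs)?)
  done
lemma alg2_2:
  fixes gen :: "nat \<Rightarrow> 'a::group_add" and h :: "'a \<Rightarrow> 'a"
  assumes g0: "gen 0 = 0" and hadd: "\<And>x y. h (x + y) = h x + h y" and hmin: "\<And>x. h (-x) = - h x"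
   and h0: "h 0 = 0" and hpw: "\<And>n x. h (pw n x) = pw n (h x)"
   and hg: "\<And>i. i < 7 \<Longrightarrow> h (gen i) = Sw gen (proto_word m i) - Sw gen (proto_word m 0)"
  shows "h (Sw gen (psi_word m 2)) + Sw gen (proto_word m 0) = gen 2"
  apply ((simp_all add: psi_word_def psi_hat_def g0)?)
  apply ((simp_all add: Eh_def Dh_def Fh_def qh_def g0 gs hadd hmin h0 hpw)?)
  apply ((simp_all add: Bh_def Gh_def Ch_def g0 gs hadd hmin h0 hpw hg)?)
  apply ((simp_all add: proto_S g0 gs)?)
  done
lemma alg2_3:
  fixes gen :: "nat \<Rightarrow> 'a::group_add" and h :: "'a \<Rightarrow> 'a"
  assumes g0: "gen 0 = 0" and hadd: "\<And>x y. h (x + y) = h x + h y" and hmin: "\<And>x. h (-x) = - h x"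
   and h0: "h 0 = 0" and hpw: "\<And>n x. h (pw n x) = pw n (h x)"
   and hg: "\<And>i. i < 7 \<Longrightarrow> h (gen i) = Sw gen (proto_word m i) - Sw gen (proto_word m 0)"
  shows "h (Sw gen (psi_word m 3)) + Sw gen (proto_word m 0) = gen 3"
  apply ((simp_all add: psi_word_def psi_hat_def g0)?)
  apply ((simp_all add: Eh_def Dh_def Fh_def qh_def g0 gs hadd hmin h0 hpw)?)
  apply ((simp_all add: Bh_def Gh_def Ch_def g0 gs hadd hmin h0 hpw hg)?)
  apply ((simp_all add: proto_S g0 gs)?)
  done
lemma alg2_4:
  fixes gen :: "nat \<Rightarrow> 'a::group_add" and h :: "'a \<Rightarrow> 'a"
  assumes g0: "gen 0 = 0" and hadd: "\<And>x y. h (x + y) = h x + h y" and hmin: "\<And>x. h (-x) = - h x"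
   and h0: "h 0 = 0" and hpw: "\<And>n x. h (pw n x) = pw n (h x)"
   and hg: "\<And>i. i < 7 \<Longrightarrow> h (gen i) = Sw gen (proto_word m i) - Sw gen (proto_word m 0)"
  shows "h (Sw gen (psi_word m 4)) + Sw gen (proto_word m 0) = gen 4"
  apply ((simp_all add: psi_word_def psi_hat_def g0)?)
  apply ((simp_all add: Eh_def Dh_def Fh_def qh_def g0 gs hadd hmin h0 hpw)?)
  apply ((simp_all add: Bh_def Gh_def Ch_def g0 gs hadd hmin h0 hpw hg)?)
  apply ((simp_all add: proto_S g0 gs)?)
  done
lemma alg2_5:
  fixes gen :: "nat \<Rightarrow> 'a::group_add" and h :: "'a \<Rightarrow> 'a"
  assumes g0: "gen 0 = 0" and hadd: "\<And>x y. h (x + y) = h x + h y" and hmin: "\<And>x. h (-x) = - h x"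
   and h0: "h 0 = 0" and hpw: "\<And>n x. h (pw n x) = pw n (h x)"
   and hg: "\<And>i. i < 7 \<Longrightarrow> h (gen i) = Sw gen (proto_word m i) - Sw gen (proto_word m 0)"
  shows "h (Sw gen (psi_word m 5)) + Sw gen (proto_word m 0) = gen 5"
  apply ((simp_all add: psi_word_def psi_hat_def g0)?)
  apply ((simp_all add: Eh_def Dh_def Fh_def qh_def g0 gs hadd hmin h0 hpw)?)
  apply ((simp_all add: Bh_def Gh_def Ch_def g0 gs hadd hmin h0 hpw hg)?)
  apply ((simp_all add: proto_S g0 gs)?)
  done
lemma alg2_6:
  fixes gen :: "nat \<Rightarrow> 'a::group_add" and h :: "'a \<Rightarrow> 'a"
  assumes g0: "gen 0 = 0" and hadd: "\<And>x y. h (x + y) = h x + h y" and hmin: "\<And>x. h (-x) = - h x"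
   and h0: "h 0 = 0" and hpw: "\<And>n x. h (pw n x) = pw n (h x)"
   and hg: "\<And>i. i < 7 \<Longrightarrow> h (gen i) = Sw gen (proto_word m i) - Sw gen (proto_word m 0)"
  shows "h (Sw gen (psi_word m 6)) + Sw gen (proto_word m 0) = gen 6"
  apply ((simp_all add: psi_word_def psi_hat_def g0)?)
  apply ((simp_all add: Eh_def Dh_def Fh_def qh_def g0 gs hadd hmin h0 hpw)?)
  apply ((simp_all add: Bh_def Gh_def Ch_def g0 gs hadd hmin h0 hpw hg)?)
  apply ((simp_all add: proto_S g0 gs)?)
  done

declare add_uminus_conv_diff[simp]

definition loopP :: "(real \<Rightarrow> real \<times> real) \<Rightarrow> bool" where
  "loopP p \<longleftrightarrow> path p \<and> path_image p \<subseteq> P7 \<and> pathstart p = (0,0) \<and> pathfinish p = (0,0)"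
definition lrel :: "(real \<Rightarrow> real \<times> real) \<Rightarrow> (real \<Rightarrow> real \<times> real) \<Rightarrow> bool" where
  "lrel p q \<longleftrightarrow> loopP p \<and> loopP q \<and> homotopic_paths P7 p q"

lemma v0_P7: "(0,0) \<in> P7" using arc_in_P7[of 0 0] by simp

lemma loopP_const: "loopP (linepath (0,0) (0,0))"
  using v0_P7 by (simp add: loopP_def)

lemma part_equivp_lrel: "part_equivp lrel"
proof (rule part_equivpI)
  show "\<exists>x. lrel x x" using loopP_const by (auto simp: lrel_def loopP_def intro!: exI[where x="linepath (0,0) (0,0)"])
  show "symp lrel" by (auto simp: symp_def lrel_def intro: homotopic_paths_sym)
  show "transp lrel" by (auto simp: transp_def lrel_def intro: homotopic_paths_trans)
qed

quotient_type lp7 = "real \<Rightarrow> real \<times> real" / partial: lrel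
  by (rule part_equivp_lrel)

lemma lrel_refl: "lrel p p \<longleftrightarrow> loopP p" by (auto simp: lrel_def loopP_def)

lemma loopP_join: "loopP p \<Longrightarrow> loopP q \<Longrightarrow> loopP (p +++ q)"
  by (auto simp: loopP_def path_image_join)
lemma loopP_rev: "loopP p \<Longrightarrow> loopP (reversepath p)"
  by (auto simp: loopP_def)

instantiation lp7 :: group_add
begin
lift_definition zero_lp7 :: lp7 is "linepath (0,0) (0,0)"
  using loopP_const by (simp add: lrel_refl)
lift_definition plus_lp7 :: "lp7 \<Rightarrow> lp7 \<Rightarrow> lp7" is "\<lambda>p q. p +++ q"
  by (auto simp: lrel_def loopP_def path_image_join intro: homotopic_paths_join)
lift_definition uminus_lp7 :: "lp7 \<Rightarrow> lp7" is reversepath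
  by (auto simp: lrel_def loopP_def homotopic_paths_reversepath)
definition minus_lp7 :: "lp7 \<Rightarrow> lp7 \<Rightarrow> lp7" where "minus_lp7 a b = a + - b"
instance
proof
  fix a b c :: lp7
  show "a + b + c = a + (b + c)"
    by transfer (auto simp: lrel_def loopP_def path_image_join intro!: homotopic_paths_sym[OF homotopic_paths_assoc])
  show "0 + a = a"
    by transfer (auto simp: lrel_def loopP_def path_image_join intro!: homotopic_paths_lid')
  show "a + 0 = a"
    by transfer (auto simp: lrel_def loopP_def path_image_join intro!: homotopic_paths_rid')
  show "- a + a = 0"
    by transfer (auto simp: lrel_def loopP_def path_image_join intro!: homotopic_paths_linv[THEN homotopic_paths_trans])
  show "a + - b = a - b" by (simp add: minus_lp7_def)
qed
end

abbreviation cls :: "(real \<Rightarrow> real \<times> real) \<Rightarrow> lp7" where "cls \<equiv> abs_lp7"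

lemma cls_eq: "loopP p \<Longrightarrow> loopP q \<Longrightarrow> cls p = cls q \<longleftrightarrow> homotopic_paths P7 p q"
  by (metis Quotient3_rel[OF Quotient3_lp7] lrel_def lrel_refl)
lemma cls_plus: "loopP p \<Longrightarrow> loopP q \<Longrightarrow> cls p + cls q = cls (p +++ q)"
  by (simp add: plus_lp7.abs_eq lrel_refl)
lemma cls_uminus: "loopP p \<Longrightarrow> - cls p = cls (reversepath p)"
  by (simp add: uminus_lp7.abs_eq lrel_refl)
lemma cls_zero: "0 = cls (linepath (0,0) (0,0))"
  by (simp add: zero_lp7.abs_eq)
lemma loopP_hom: "loopP p \<Longrightarrow> homotopic_paths P7 p q \<Longrightarrow> loopP q"
  unfolding loopP_def using homotopic_paths_imp_path homotopic_paths_imp_subset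
    homotopic_paths_imp_pathstart homotopic_paths_imp_pathfinish by metis
lemma cls_hom: "loopP p \<Longrightarrow> homotopic_paths P7 p q \<Longrightarrow> cls p = cls q"
  using cls_eq loopP_hom by blast

definition okmap :: "(real \<times> real \<Rightarrow> real \<times> real) \<Rightarrow> bool" where
  "okmap f \<longleftrightarrow> continuous_on P7 f \<and> f \<in> P7 \<rightarrow> P7 \<and> f (0,0) = (0,0)"

lemma loopP_compose: "okmap f \<Longrightarrow> loopP p \<Longrightarrow> loopP (f \<circ> p)"
  unfolding okmap_def loopP_def
  by (auto simp: path_image_compose pathstart_compose pathfinish_compose
      intro: path_continuous_image continuous_on_subset)

lift_definition hs :: "(real \<times> real \<Rightarrow> real \<times> real) \<Rightarrow> lp7 \<Rightarrow> lp7" is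
  "\<lambda>f p. if okmap f then f \<circ> p else p"
proof -
  fix f :: "real \<times> real \<Rightarrow> real \<times> real" and p q assume "lrel p q"
  then show "lrel (if okmap f then f \<circ> p else p) (if okmap f then f \<circ> q else q)"
    unfolding lrel_def using loopP_compose
    by (auto simp: okmap_def intro: homotopic_paths_continuous_image)
qed

lemma hs_cls: "okmap f \<Longrightarrow> loopP p \<Longrightarrow> hs f (cls p) = cls (f \<circ> p)"
  by (simp add: hs.abs_eq lrel_refl)

lemma hs_add: assumes "okmap f" shows "hs f (x + y) = hs f x + hs f y"
proof (induction x rule: lp7.abs_induct)
  case (1 p)
  show ?case
  proof (induction y rule: lp7.abs_induct)
    case (1 q)
    have lp: "loopP p" "loopP q" using \<open>lrel p p\<close> \<open>lrel q q\<close> by (auto simp: lrel_refl)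
    show ?case using lp assms
      by (simp add: cls_plus hs_cls loopP_join loopP_compose path_compose_join)
  qed
qed

lemma hs_zero: assumes "okmap f" shows "hs f 0 = 0"
proof -
  have "f \<circ> linepath (0,0) (0,0) = linepath (0,0) (0,0)"
    using assms by (auto simp: okmap_def linepath_refl)
  then show ?thesis using assms loopP_const by (simp add: cls_zero hs_cls)
qed

lemma hs_uminus: assumes "okmap f" shows "hs f (- x) = - hs f x"
  by (metis add.right_inverse add_left_imp_eq assms hs_add hs_zero)

abbreviation A :: "real \<Rightarrow> real \<times> real" where "A \<equiv> reversepath (arc 0)"

definition gn :: "nat \<Rightarrow> lp7" where "gn i = cls (arc i +++ A)"

definition P01 :: "(real \<Rightarrow> real \<times> real) \<Rightarrow> bool" where
  "P01 p \<longleftrightarrow> path p \<and> path_image p \<subseteq> P7 \<and> pathstart p = (0,0) \<and> pathfinish p = (1,0)"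
definition P10 :: "(real \<Rightarrow> real \<times> real) \<Rightarrow> bool" where
  "P10 p \<longleftrightarrow> path p \<and> path_image p \<subseteq> P7 \<and> pathstart p = (1,0) \<and> pathfinish p = (0,0)"

lemma P01_arc: "i < 7 \<Longrightarrow> P01 (arc i)"
  by (auto simp: P01_def path_image_arc aset_sub pathstart_def pathfinish_def)
lemma P10_A: "P10 A"
  using P01_arc[of 0] by (auto simp: P01_def P10_def)
lemma P10_rev: "P01 p \<Longrightarrow> P10 (reversepath p)"
  by (auto simp: P01_def P10_def)
lemma loopP_01_10: "P01 p \<Longrightarrow> P10 q \<Longrightarrow> loopP (p +++ q)"
  by (auto simp: P01_def P10_def loopP_def path_image_join)

lemma gn0: "gn 0 = 0"
proof -
  have "homotopic_paths P7 (arc 0 +++ A) (linepath (0,0) (0,0))"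
    using homotopic_paths_rinv[of "arc 0" P7] P01_arc[of 0] by (simp add: P01_def pathstart_def)
  then show ?thesis unfolding gn_def cls_zero
    using loopP_01_10[OF P01_arc[of 0] P10_A] by (simp add: cls_hom)
qed

lemma K0: assumes p: "P01 p" and q: "P10 q"
  shows "homotopic_paths P7 ((p +++ A) +++ (arc 0 +++ q)) (p +++ q)"
proof -
  have a: "P01 (arc 0)" by (rule P01_arc) simp
  note defs = P01_def P10_def
  have pA: "path A" "path_image A \<subseteq> P7" using P10_A by (auto simp: P10_def)
  have "homotopic_paths P7 ((p +++ A) +++ (arc 0 +++ q)) (p +++ (A +++ (arc 0 +++ q)))"
    using p q a pA by (intro homotopic_paths_sym[OF homotopic_paths_assoc]) (auto simp: defs path_image_join)
  also have "homotopic_paths P7 \<dots> (p +++ ((A +++ arc 0) +++ q))"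
    using p q a pA by (intro homotopic_paths_join homotopic_paths_assoc) (auto simp: defs path_image_join)
  also have "homotopic_paths P7 \<dots> (p +++ (linepath (1,0) (1,0) +++ q))"
    using p q a pA homotopic_paths_linv[of "arc 0" P7]
    by (intro homotopic_paths_join) (auto simp: defs path_image_join)
  also have "homotopic_paths P7 \<dots> (p +++ q)"
    using p q by (intro homotopic_paths_join homotopic_paths_lid') (auto simp: defs)
  finally show ?thesis .
qed

lemma K4: assumes p: "P01 p" shows "homotopic_paths P7 ((p +++ A) +++ arc 0) p"
proof -
  have a: "P01 (arc 0)" by (rule P01_arc) simp
  note defs = P01_def P10_def
  have pA: "path A" "path_image A \<subseteq> P7" using P10_A by (auto simp: P10_def)
  have "homotopic_paths P7 ((p +++ A) +++ arc 0) (p +++ (A +++ arc 0))"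
    using p a pA by (intro homotopic_paths_sym[OF homotopic_paths_assoc]) (auto simp: defs)
  also have "homotopic_paths P7 \<dots> (p +++ linepath (1,0) (1,0))"
    using p a pA homotopic_paths_linv[of "arc 0" P7]
    by (intro homotopic_paths_join) (auto simp: defs pathfinish_def)
  also have "homotopic_paths P7 \<dots> p"
    using p by (intro homotopic_paths_rid') (auto simp: defs)
  finally show ?thesis .
qed

lemma K2: assumes "P01 r" shows "cls (arc 0 +++ reversepath r) = - cls (r +++ A)"
proof -
  have "reversepath (r +++ A) = arc 0 +++ reversepath r"
    using assms by (simp add: reversepath_joinpaths P01_def)
  then show ?thesis using loopP_01_10[OF assms P10_A] by (simp add: cls_uminus)
qed

lemma K3: assumes p: "P01 p" and q: "P10 q"
  shows "cls (p +++ q) = cls (p +++ A) + cls (arc 0 +++ q)"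
proof -
  have l1: "loopP (p +++ A)" by (rule loopP_01_10[OF p P10_A])
  have l2: "loopP (arc 0 +++ q)" by (rule loopP_01_10[OF P01_arc q]) simp
  show ?thesis using l1 l2 cls_plus cls_hom K0[OF p q] loopP_join by metis
qed

lemma K1: assumes p: "P01 p" and q: "P10 q" and r: "P01 r"
  shows "cls ((p +++ (q +++ r)) +++ A) = cls (p +++ A) + cls (arc 0 +++ q) + cls (r +++ A)"
proof -
  note defs = P01_def P10_def
  have a: "P01 (arc 0)" by (rule P01_arc) simp
  have pA: "path A" "path_image A \<subseteq> P7" using P10_A by (auto simp: P10_def)
  have l1: "loopP (p +++ A)" by (rule loopP_01_10[OF p P10_A])
  have l2: "loopP (arc 0 +++ q)" by (rule loopP_01_10[OF a q])
  have l3: "loopP (r +++ A)" by (rule loopP_01_10[OF r P10_A])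
  have "cls (p +++ A) + cls (arc 0 +++ q) + cls (r +++ A) = cls (((p +++ A) +++ (arc 0 +++ q)) +++ (r +++ A))"
    using l1 l2 l3 by (simp add: cls_plus loopP_join)
  also have "\<dots> = cls ((p +++ q) +++ (r +++ A))"
  proof (rule cls_hom)
    show "loopP (((p +++ A) +++ (arc 0 +++ q)) +++ (r +++ A))" using l1 l2 l3 by (simp add: loopP_join)
    show "homotopic_paths P7 (((p +++ A) +++ (arc 0 +++ q)) +++ (r +++ A)) ((p +++ q) +++ (r +++ A))"
      by (rule homotopic_paths_join[OF K0[OF p q]]) (use l3 p q in \<open>auto simp: loopP_def defs\<close>)
  qed
  also have "\<dots> = cls (((p +++ q) +++ r) +++ A)"
  proof (rule cls_hom)
    show "loopP ((p +++ q) +++ (r +++ A))" using loopP_join[OF loopP_01_10[OF p q] l3] .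
    show "homotopic_paths P7 ((p +++ q) +++ (r +++ A)) (((p +++ q) +++ r) +++ A)"
      using p q r pA by (intro homotopic_paths_assoc) (auto simp: defs path_image_join)
  qed
  also have "\<dots> = cls ((p +++ (q +++ r)) +++ A)"
  proof (rule cls_hom)
    show "loopP (((p +++ q) +++ r) +++ A)" using p q r pA by (auto simp: defs loopP_def path_image_join)
    show "homotopic_paths P7 (((p +++ q) +++ r) +++ A) ((p +++ (q +++ r)) +++ A)"
      using p q r pA by (intro homotopic_paths_join homotopic_paths_sym[OF homotopic_paths_assoc])
        (auto simp: defs path_image_join)
  qed
  finally show ?thesis by simp
qed

lemma K5: assumes p: "P01 p" and q: "P01 q" and e: "cls (p +++ A) = cls (q +++ A)"
  shows "homotopic_paths P7 p q"
proof -
  have "homotopic_paths P7 (p +++ A) (q +++ A)"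
    using e cls_eq loopP_01_10[OF p P10_A] loopP_01_10[OF q P10_A] by blast
  then have "homotopic_paths P7 ((p +++ A) +++ arc 0) ((q +++ A) +++ arc 0)"
    by (rule homotopic_paths_join) (use P01_arc[of 0] p q in \<open>auto simp: P01_def\<close>)
  then show ?thesis
    using K4[OF p] K4[OF q] homotopic_paths_trans homotopic_paths_sym by metis
qed

lemma jp_P01: "ok True w \<Longrightarrow> odd (length w) \<Longrightarrow> P01 (jp w)"
  using jp_props[of True w] by (cases w) (auto simp: P01_def)
lemma wp_P01: "ok True w \<Longrightarrow> odd (length w) \<Longrightarrow> P01 (word_path w)"
  using wp_props[of True w] by (cases w) (auto simp: P01_def)

lemma jp_S: "ok True w \<Longrightarrow> odd (length w) \<Longrightarrow> cls (jp w +++ A) = Sw gn w"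
proof (induction "length w" arbitrary: w rule: less_induct)
  case less
  obtain x w1 where w: "w = x # w1" using less.prems by (cases w) auto
  obtain i where x: "x = (i, True)" "i < 7" using less.prems w by (cases x) auto
  show ?case
  proof (cases w1)
    case Nil
    then show ?thesis using w x by (simp add: gn_def)
  next
    case (Cons y w2)
    obtain j where y: "y = (j, False)" "j < 7" using less.prems w Cons by (cases y) auto
    have w2: "ok True w2" "odd (length w2)" using less.prems w Cons y by auto
    then obtain z w3 where w3: "w2 = z # w3" by (cases w2) auto
    have jw: "jp w = arc i +++ (reversepath (arc j) +++ jp w2)"
      using w x Cons y w3 by simp
    have IH: "cls (jp w2 +++ A) = Sw gn w2" using less.hyps[of w2] w2 w Cons by simp
    have "cls (jp w +++ A) = cls (arc i +++ A) + cls (arc 0 +++ reversepath (arc j)) + cls (jp w2 +++ A)"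
      unfolding jw by (rule K1[OF P01_arc[OF x(2)] P10_rev[OF P01_arc[OF y(2)]] jp_P01[OF w2]])
    also have "\<dots> = gn i + - gn j + Sw gn w2"
      using IH K2[OF P01_arc[OF y(2)]] by (simp add: gn_def)
    finally show ?thesis using w x Cons y by (simp add: add.assoc diff_conv_add_uminus del: add_uminus_conv_diff)
  qed
qed

lemma wp_S: assumes "ok True w" "odd (length w)" shows "cls (word_path w +++ A) = Sw gn w"
proof -
  have ne: "w \<noteq> []" using assms by auto
  have "cls (jp w +++ A) = cls (word_path w +++ A)"
  proof (rule cls_hom)
    show "loopP (jp w +++ A)" by (rule loopP_01_10[OF jp_P01[OF assms] P10_A])
    show "homotopic_paths P7 (jp w +++ A) (word_path w +++ A)"
      by (rule homotopic_paths_join[OF wp_hom[OF assms(1) ne]])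
        (use P10_A jp_P01[OF assms] in \<open>auto simp: P10_def P01_def\<close>)
  qed
  then show ?thesis using jp_S[OF assms] by simp
qed

lemma good_okmap: "good W \<Longrightarrow> okmap (graph_map W)"
  using gm_cont gm_image by (simp add: okmap_def)

lemma good_P01: "good W \<Longrightarrow> i < 7 \<Longrightarrow> P01 (word_path (W i))"
  using good_wp by (simp add: P01_def)

lemma good_S: "good W \<Longrightarrow> i < 7 \<Longrightarrow> cls (word_path (W i) +++ A) = Sw gn (W i)"
  using wp_S unfolding good_def by blast

lemma gm_arc_hom: assumes "good W" "i < 7"
  shows "homotopic_paths P7 (graph_map W \<circ> arc i) (word_path (W i))"
proof -
  have "homotopic_paths P7 (word_path (W i)) (graph_map W \<circ> arc i)"
    using good_wp[OF assms] gm_arc[OF assms] by (intro homotopic_paths_eq) auto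
  then show ?thesis by (rule homotopic_paths_sym)
qed

lemma HG: assumes U: "good U" and i: "i < 7"
  shows "hs (graph_map U) (gn i) = Sw gn (U i) - Sw gn (U 0)"
proof -
  let ?f = "graph_map U"
  have ok: "okmap ?f" by (rule good_okmap[OF U])
  have l: "loopP (arc i +++ A)" by (rule loopP_01_10[OF P01_arc[OF i] P10_A])
  have "hs ?f (gn i) = cls (?f \<circ> (arc i +++ A))" unfolding gn_def by (rule hs_cls[OF ok l])
  also have "?f \<circ> (arc i +++ A) = (?f \<circ> arc i) +++ reversepath (?f \<circ> arc 0)"
    by (simp add: path_compose_join path_compose_reversepath)
  also have "cls \<dots> = cls (word_path (U i) +++ reversepath (word_path (U 0)))"
  proof (rule cls_hom)
    have "loopP (?f \<circ> (arc i +++ A))" by (rule loopP_compose[OF ok l])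
    then show "loopP ((?f \<circ> arc i) +++ reversepath (?f \<circ> arc 0))"
      by (simp add: path_compose_join path_compose_reversepath)
    show "homotopic_paths P7 ((?f \<circ> arc i) +++ reversepath (?f \<circ> arc 0))
        (word_path (U i) +++ reversepath (word_path (U 0)))"
      using gm_arc_hom[OF U i] gm_arc_hom[OF U, of 0] good_wp[OF U i]
      by (intro homotopic_paths_join) (auto simp: homotopic_paths_reversepath pathstart_compose pathfinish_compose)
  qed
  also have "\<dots> = cls (word_path (U i) +++ A) + cls (arc 0 +++ reversepath (word_path (U 0)))"
    by (rule K3[OF good_P01[OF U i] P10_rev[OF good_P01[OF U, of 0]]]) simp
  also have "\<dots> = Sw gn (U i) - Sw gn (U 0)"
    using K2[OF good_P01[OF U, of 0]] good_S[OF U i] good_S[OF U, of 0] by simp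
  finally show ?thesis .
qed


lemma gm_v1[simp]: "graph_map W (1,0) = (1,0)" by (simp add: graph_map_def)

lemma P01_compose: "okmap f \<Longrightarrow> f (1,0) = (1,0) \<Longrightarrow> P01 p \<Longrightarrow> P01 (f \<circ> p)"
  unfolding okmap_def P01_def
  by (auto simp: path_image_compose pathstart_compose pathfinish_compose
      intro: path_continuous_image continuous_on_subset)

lemma okmap_comp: assumes "okmap f" "okmap g" shows "okmap (f \<circ> g)"
proof -
  have "continuous_on P7 (f \<circ> g)"
  proof (rule continuous_on_compose)
    show "continuous_on P7 g" using assms by (simp add: okmap_def)
    have "g ` P7 \<subseteq> P7" using assms by (auto simp: okmap_def)
    then show "continuous_on (g ` P7) f" using assms by (auto simp: okmap_def elim: continuous_on_subset)
  qed
  then show ?thesis using assms by (auto simp: okmap_def)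
qed

lemma CL: assumes U: "good U" and W: "good W" and x: "x < 7"
  shows "cls (((graph_map U \<circ> graph_map W) \<circ> arc x) +++ A) = hs (graph_map U) (Sw gn (W x)) + Sw gn (U 0)"
proof -
  let ?f = "graph_map U" and ?w = "word_path (W x)" and ?wa = "word_path (U 0)"
  let ?g = "?w +++ A"
  have okf: "okmap ?f" by (rule good_okmap[OF U])
  have okg: "okmap (graph_map W)" by (rule good_okmap[OF W])
  have Pw: "P01 ?w" by (rule good_P01[OF W x])
  have Pwa: "P01 ?wa" by (rule good_P01[OF U]) simp
  have lg: "loopP ?g" by (rule loopP_01_10[OF Pw P10_A])
  have Pfw: "P01 (?f \<circ> ?w)" by (rule P01_compose[OF okf _ Pw]) simp
  have PL: "P01 ((?f \<circ> graph_map W) \<circ> arc x)"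
    by (rule P01_compose[OF okmap_comp[OF okf okg] _ P01_arc[OF x]]) simp
  have lfg: "loopP (?f \<circ> ?g)" by (rule loopP_compose[OF okf lg])
  have h1: "homotopic_paths P7 ((?f \<circ> graph_map W) \<circ> arc x) (?f \<circ> ?w)"
  proof -
    have "homotopic_paths P7 (?f \<circ> ?w) ((?f \<circ> graph_map W) \<circ> arc x)"
      using Pfw gm_arc[OF W x] by (intro homotopic_paths_eq) (auto simp: P01_def)
    then show ?thesis by (rule homotopic_paths_sym)
  qed
  have h2: "homotopic_paths P7 (?f \<circ> ?w) (?f \<circ> (?g +++ arc 0))"
    using homotopic_paths_sym[OF K4[OF Pw]] okf
    by (intro homotopic_paths_continuous_image) (auto simp: okmap_def)
  have e: "?f \<circ> (?g +++ arc 0) = (?f \<circ> ?g) +++ (?f \<circ> arc 0)" by (simp add: path_compose_join)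
  have h3: "homotopic_paths P7 ((?f \<circ> ?g) +++ (?f \<circ> arc 0)) ((?f \<circ> ?g) +++ ?wa)"
    using lfg gm_arc_hom[OF U, of 0] by (intro homotopic_paths_join) (auto simp: loopP_def pathstart_compose)
  have h: "homotopic_paths P7 ((?f \<circ> graph_map W) \<circ> arc x) ((?f \<circ> ?g) +++ ?wa)"
    by (rule homotopic_paths_trans[OF homotopic_paths_trans[OF h1 h2[unfolded e]] h3])
  have "cls (((?f \<circ> graph_map W) \<circ> arc x) +++ A) = cls (((?f \<circ> ?g) +++ ?wa) +++ A)"
  proof (rule cls_hom)
    show "loopP (((?f \<circ> graph_map W) \<circ> arc x) +++ A)" by (rule loopP_01_10[OF PL P10_A])
    show "homotopic_paths P7 (((?f \<circ> graph_map W) \<circ> arc x) +++ A) (((?f \<circ> ?g) +++ ?wa) +++ A)"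
      by (rule homotopic_paths_join[OF h]) (use P10_A PL in \<open>auto simp: P10_def P01_def\<close>)
  qed
  also have "\<dots> = cls ((?f \<circ> ?g) +++ (?wa +++ A))"
  proof (rule cls_hom)
    show "loopP (((?f \<circ> ?g) +++ ?wa) +++ A)"
      using lfg Pwa P10_A by (auto simp: loopP_def P01_def P10_def path_image_join)
    show "homotopic_paths P7 (((?f \<circ> ?g) +++ ?wa) +++ A) ((?f \<circ> ?g) +++ (?wa +++ A))"
      using lfg Pwa P10_A by (intro homotopic_paths_sym[OF homotopic_paths_assoc])
        (auto simp: loopP_def P01_def P10_def)
  qed
  also have "\<dots> = cls (?f \<circ> ?g) + cls (?wa +++ A)"
    using lfg loopP_01_10[OF Pwa P10_A] by (simp add: cls_plus)
  also have "\<dots> = hs ?f (Sw gn (W x)) + Sw gn (U 0)"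
    using hs_cls[OF okf lg] good_S[OF W x] good_S[OF U, of 0] by simp
  finally show ?thesis .
qed

lemma FH: assumes U: "good U" and W: "good W"
    and eq: "\<And>x. x < 7 \<Longrightarrow> hs (graph_map U) (Sw gn (W x)) + Sw gn (U 0) = gn x"
  shows "homotopic_with (\<lambda>x. True) P7_top P7_top (graph_map U \<circ> graph_map W) id"
proof (rule paste_hom)
  have ok: "okmap (graph_map U \<circ> graph_map W)" by (rule okmap_comp[OF good_okmap[OF U] good_okmap[OF W]])
  then show "continuous_on P7 (graph_map U \<circ> graph_map W)" "graph_map U \<circ> graph_map W \<in> P7 \<rightarrow> P7"
    by (auto simp: okmap_def)
  show "continuous_on P7 id" "id \<in> P7 \<rightarrow> P7" by auto
  fix i :: nat assume i: "i < 7"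
  have PL: "P01 ((graph_map U \<circ> graph_map W) \<circ> arc i)"
    by (rule P01_compose[OF ok _ P01_arc[OF i]]) simp
  show "homotopic_paths P7 ((graph_map U \<circ> graph_map W) \<circ> arc i) (id \<circ> arc i)"
    using K5[OF PL P01_arc[OF i]] CL[OF U W i] eq[OF i] by (simp add: gn_def)
qed

lemma hs_pw: "okmap f \<Longrightarrow> hs f (pw n x) = pw n (hs f x)"
  by (induct n) (simp_all add: hs_add hs_zero)

lemma ok_app: "ok b (u @ v) = (ok b u \<and> ok (if even (length u) then b else \<not> b) v)"
proof (induct u arbitrary: b)
  case (Cons l u)
  have e: "(if even (length u) then \<not> b else \<not> \<not> b) = (if even (length (l # u)) then b else \<not> b)"
    by simp
  show ?case using Cons[of "\<not> b"] e by (simp only: append_Cons ok.simps) metis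
qed simp
lemma length_rep[simp]: "length (rep k u) = k * length u"
  by (induct k) (auto simp: rep_def)
lemma ok_rep[simp]: "ok b u \<Longrightarrow> even (length u) \<Longrightarrow> ok b (rep k u)"
  by (induct k) (auto simp: rep_def ok_app)
lemma set_rep[simp]: "set (rep k u) = (if k = 0 then {} else set u)"
  by (induct k) (auto simp: rep_def)
lemma length_bw[simp]: "length (bw l) = 2" by (cases l; cases "snd l") auto
lemma length_bars[simp]: "length (bars u) = 2 * length u"
  by (induct u) (auto simp: bars_def)
lemma ok_bars[simp]: "ok True (bars u) = (\<forall>l\<in>set u. fst l < 7)"
proof (induct u)
  case (Cons l u)
  then show ?case by (cases l; cases "snd l") (auto simp: bars_def)
qed (simp add: bars_def)

lemma good_proto: "good (proto_word m)"
  unfolding good_def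
proof (intro allI impI)
  fix i :: nat assume "i < 7"
  then have "i = 0 \<or> i = 1 \<or> i = 2 \<or> i = 3 \<or> i = 4 \<or> i = 5 \<or> i = 6" by auto
  then show "ok True (proto_word m i) \<and> odd (length (proto_word m i))"
    apply (elim disjE)
    apply (simp_all add: proto_word_def Let_def rep_def[symmetric])
    apply (simp_all add: ok_app)
    done
qed

lemma good_psi: "good (psi_word m)"
  unfolding good_def
proof (intro allI impI)
  fix i :: nat assume "i < 7"
  then have "i = 0 \<or> i = 1 \<or> i = 2 \<or> i = 3 \<or> i = 4 \<or> i = 5 \<or> i = 6" by auto
  then show "ok True (psi_word m i) \<and> odd (length (psi_word m i))"
    apply (elim disjE)
    apply (simp_all add: psi_word_def psi_hat_def Eh_def Dh_def Fh_def qh_def Bh_def Gh_def Ch_def flipw_def)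
    apply (simp_all add: ok_app)
    done
qed


lemma alg1_all:
  fixes gen :: "nat \<Rightarrow> 'a::group_add" and h :: "'a \<Rightarrow> 'a"
  assumes g0: "gen 0 = 0" and hadd: "\<And>x y. h (x + y) = h x + h y" and hmin: "\<And>x. h (-x) = - h x"
   and h0: "h 0 = 0" and hpw: "\<And>n x. h (pw n x) = pw n (h x)"
   and hg: "\<And>i. i < 7 \<Longrightarrow> h (gen i) = Sw gen (psi_word m i) - Sw gen (psi_word m 0)"
   and x: "x < 7"
  shows "h (Sw gen (proto_word m x)) + Sw gen (psi_word m 0) = gen x"
proof -
  have "x = 0 \<or> x = 1 \<or> x = 2 \<or> x = 3 \<or> x = 4 \<or> x = 5 \<or> x = 6" using x by auto
  then show ?thesis
    using alg1_0[OF g0 hadd hmin h0 hpw hg] alg1_1[OF g0 hadd hmin h0 hpw hg] alg1_2[OF g0 hadd hmin h0 hpw hg]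
      alg1_3[OF g0 hadd hmin h0 hpw hg] alg1_4[OF g0 hadd hmin h0 hpw hg] alg1_5[OF g0 hadd hmin h0 hpw hg]
      alg1_6[OF g0 hadd hmin h0 hpw hg]
    by (elim disjE) simp_all
qed

lemma alg2_all:
  fixes gen :: "nat \<Rightarrow> 'a::group_add" and h :: "'a \<Rightarrow> 'a"
  assumes g0: "gen 0 = 0" and hadd: "\<And>x y. h (x + y) = h x + h y" and hmin: "\<And>x. h (-x) = - h x"
   and h0: "h 0 = 0" and hpw: "\<And>n x. h (pw n x) = pw n (h x)"
   and hg: "\<And>i. i < 7 \<Longrightarrow> h (gen i) = Sw gen (proto_word m i) - Sw gen (proto_word m 0)"
   and x: "x < 7"
  shows "h (Sw gen (psi_word m x)) + Sw gen (proto_word m 0) = gen x"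
proof -
  have "x = 0 \<or> x = 1 \<or> x = 2 \<or> x = 3 \<or> x = 4 \<or> x = 5 \<or> x = 6" using x by auto
  then show ?thesis
    using alg2_0[OF g0 hadd hmin h0 hpw hg] alg2_1[OF g0 hadd hmin h0 hpw hg] alg2_2[OF g0 hadd hmin h0 hpw hg]
      alg2_3[OF g0 hadd hmin h0 hpw hg] alg2_4[OF g0 hadd hmin h0 hpw hg] alg2_5[OF g0 hadd hmin h0 hpw hg]
      alg2_6[OF g0 hadd hmin h0 hpw hg]
    by (elim disjE) simp_all
qed

theorem mainTheorem4:
  fixes n :: nat
  assumes "odd n" and "0 < n"
  shows "homotopy_equivalence P7_top P7_top (proto_map n)"
proof (cases "n = 1")
  case True
  have c: "continuous_map P7_top P7_top id" by simp
  show ?thesis unfolding homotopy_equivalence_def proto_map_def using True c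
    by (auto intro!: exI[where x=id])
next
  case False
  define m where "m = (n - 3) div 2"
  have pm: "proto_map n = graph_map (proto_word m)" using False by (simp add: proto_map_def m_def)
  let ?f = "graph_map (proto_word m)" and ?g = "graph_map (psi_word m)"
  have okf: "okmap ?f" by (rule good_okmap[OF good_proto])
  have okg: "okmap ?g" by (rule good_okmap[OF good_psi])
  have h1: "homotopic_with (\<lambda>x. True) P7_top P7_top (?g \<circ> ?f) id"
  proof (rule FH[OF good_psi good_proto])
    fix x :: nat assume x: "x < 7"
    show "hs ?g (Sw gn (proto_word m x)) + Sw gn (psi_word m 0) = gn x"
      by (rule alg1_all[OF gn0 hs_add[OF okg] hs_uminus[OF okg] hs_zero[OF okg] hs_pw[OF okg]
            HG[OF good_psi] x])
  qed
  have h2: "homotopic_with (\<lambda>x. True) P7_top P7_top (?f \<circ> ?g) id"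
  proof (rule FH[OF good_proto good_psi])
    fix x :: nat assume x: "x < 7"
    show "hs ?f (Sw gn (psi_word m x)) + Sw gn (proto_word m 0) = gn x"
      by (rule alg2_all[OF gn0 hs_add[OF okf] hs_uminus[OF okf] hs_zero[OF okf] hs_pw[OF okf]
            HG[OF good_proto] x])
  qed
  show ?thesis unfolding homotopy_equivalence_def pm
    using gm_cmap[OF good_proto] gm_cmap[OF good_psi] h1 h2 by blast
qed

end
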